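(* Let $f:\mathbb{R}^n\to\mathbb{R}$ be continuous with bounded lower-level sets, and let $\gamma_k>0$, $\delta_k>0$ with $\gamma_k\delta_k\le c$ for all $k$ and some $c>0$. Then, for arbitrary $\hat x\in X$, all $k$, and every $x_k^*\in X_k^*$, $$\mathrm{dist}(x_k^*,X)\le\frac{m\beta}{\gamma_k}\big(f(\hat x)-f(x_k^* )\big)+\frac{m\beta\,\delta_k}{4\alpha_{\min}}.$$ In particular, if $\gamma_k\to\infty$ and $\delta_k\to0$, then $\lim_{k\to\infty}\mathrm{dist}(x_k^*,X)=0$, with convergence rate of order $O(\gamma_k^{-1}+\delta_k)$.
   Context: Let $a_1,\dots,a_m\in\mathbb{R}^n$ be nonzero vectors and $b_1,\dots,b_m\in\mathbb{R}$; $X_i=\{x:\langle a_i,x\rangle-b_i\le0\}$, $X=\bigcap_{i=1}^mX_i$ (assumed nonempty), $\alpha_{\min}=\min_i\|a_i\|$, and $\mathrm{dist}(x,Y)$ is the Euclidean distance from $x$ to $Y$. $\beta>0$ is a Hoffman constant: a scalar such that $\beta\sum_{i=1}^m\mathrm{dist}(x,X_i)\ge\mathrm{dist}(x,X)$ for all $x\in\mathbb{R}^n$ (such a scalar exists). For $\delta>0$, nonzero $a$ and scalar $b$: $h_\delta(x;a,b)=\frac{\langle a,x\rangle-b}{\|a\|}$ if $\langle a,x\rangle-b>\delta$, $\frac{(\langle a,x\rangle-b+\delta)^2}{4\delta\|a\|}$ if $-\delta\le\langle a,x\rangle-b\le\delta$, $0$ if $\langle a,x\rangle-b<-\delta$.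 For each $k$, $F_k(x)=f(x)+\frac{\gamma_k}{m}\sum_{i=1}^m h_{\delta_k}(x;a_i,b_i)$, and $X_k^*$ is the set of minimizers of $F_k$ over $\mathbb{R}^n$. *)

theory Defs
  imports "HOL-Analysis.Analysis" "HOL-Library.Landau_Symbols"
begin

definition hdelta :: "real \<Rightarrow> real^'n \<Rightarrow> real \<Rightarrow> real^'n \<Rightarrow> real" where
  "hdelta \<delta> a b x =
     (let t = a \<bullet> x - b in
      if t > \<delta> then t / norm a
      else if - \<delta> \<le> t then (t + \<delta>)^2 / (4 * \<delta> * norm a)
      else 0)"

definition halfspace :: "real^'n \<Rightarrow> real \<Rightarrow> (real^'n) set" where
  "halfspace a b = {x. a \<bullet> x - b \<le> 0}"

definition Fpen :: "(real^'n \<Rightarrow> real) \<Rightarrow> (nat \<Rightarrow> real^'n) \<Rightarrow> (nat \<Rightarrow> real) \<Rightarrow> nat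
                    \<Rightarrow> real \<Rightarrow> real \<Rightarrow> real^'n \<Rightarrow> real" where
  "Fpen f a b m \<gamma> \<delta> x = f x + \<gamma> / real m * (\<Sum>i\<in>{1..m}. hdelta \<delta> (a i) (b i) x)"

definition minimizers :: "(real^'n \<Rightarrow> real) \<Rightarrow> (real^'n) set" where
  "minimizers F = {x. \<forall>y. F x \<le> F y}"

end

theory Submission
  imports Defs
begin

lemma hd_nonneg: "\<delta> > 0 \<Longrightarrow> a \<noteq> 0 \<Longrightarrow> hdelta \<delta> a b x \<ge> 0"
  by (auto simp: hdelta_def Let_def)

lemma hd_le: assumes "\<delta> > 0" "a \<noteq> 0" "x \<in> halfspace a b"
  shows "hdelta \<delta> a b x \<le> \<delta> / (4 * norm a)"
proof -
  define t where "t = a \<bullet> x - b"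
  have t0: "t \<le> 0" using assms(3) by (simp add: halfspace_def t_def)
  have na: "norm a > 0" using assms(2) by simp
  show ?thesis
  proof (cases "- \<delta> \<le> t")
    case True
    have "(t + \<delta>)^2 \<le> \<delta>^2" using True t0 assms(1)
      by (intro power_mono) auto
    hence "(t + \<delta>)^2 / (4 * \<delta> * norm a) \<le> \<delta>^2 / (4 * \<delta> * norm a)"
      using na assms(1) by (intro divide_right_mono) auto
    also have "\<dots> = \<delta> / (4 * norm a)" using assms(1) by (simp add: power2_eq_square)
    finally show ?thesis using True t0 assms(1) by (simp add: hdelta_def Let_def t_def[symmetric])
  next
    case False
    thus ?thesis using t0 assms(1) na by (simp add: hdelta_def Let_def t_def[symmetric])
  qed
qed

lemma infdist_half: assumes "a \<noteq> 0"
  shows "infdist x (halfspace a b) \<le> max (a \<bullet> x - b) 0 / norm a"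
proof (cases "a \<bullet> x - b \<le> 0")
  case True
  hence "x \<in> halfspace a b" by (simp add: halfspace_def)
  hence "infdist x (halfspace a b) = 0" by simp
  thus ?thesis using True by simp
next
  case False
  define t where "t = a \<bullet> x - b"
  define y where "y = x - (t / (norm a)^2) *\<^sub>R a"
  have na: "norm a > 0" using assms by simp
  have "a \<bullet> y - b = t - (t / (norm a)^2) * (a \<bullet> a)"
    by (simp add: y_def t_def inner_diff_right algebra_simps)
  also have "\<dots> = 0" using na by (simp add: power2_norm_eq_inner[symmetric])
  finally have "y \<in> halfspace a b" by (simp add: halfspace_def)
  hence "infdist x (halfspace a b) \<le> dist x y" by (rule infdist_le)
  also have "dist x y = \<bar>t\<bar> / (norm a)^2 * norm a" by (simp add: y_def dist_norm)
  also have "\<dots> = t / norm a" using False na by (simp add: t_def power2_eq_square)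
  finally show ?thesis using False by (simp add: t_def)
qed

lemma infdist_le_hd: assumes "\<delta> > 0" "a \<noteq> 0"
  shows "infdist x (halfspace a b) \<le> hdelta \<delta> a b x"
proof -
  define t where "t = a \<bullet> x - b"
  have na: "norm a > 0" using assms(2) by simp
  have "max t 0 / norm a \<le> hdelta \<delta> a b x"
  proof (cases "t > \<delta>")
    case True thus ?thesis using assms by (simp add: hdelta_def Let_def t_def[symmetric])
  next
    case F: False
    show ?thesis
    proof (cases "- \<delta> \<le> t")
      case True
      have "max t 0 * (4 * \<delta>) \<le> (t + \<delta>)^2"
      proof (cases "t \<ge> 0")
        case True
        have "0 \<le> (t - \<delta>)^2" by simp
        thus ?thesis using True by (simp add: power2_eq_square algebra_simps)
      next
        case False thus ?thesis by (simp add: max_def)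
      qed
      hence "max t 0 \<le> (t + \<delta>)^2 / (4 * \<delta>)" using assms(1) pos_le_divide_eq[of "4 * \<delta>" "max t 0" "(t + \<delta>)^2"] by linarith
      hence "max t 0 / norm a \<le> (t + \<delta>)^2 / (4 * \<delta>) / norm a"
        using na by (intro divide_right_mono) auto
      thus ?thesis using True F by (simp add: hdelta_def Let_def t_def[symmetric] mult.commute)
    next
      case False thus ?thesis using F assms by (simp add: hdelta_def Let_def t_def[symmetric])
    qed
  qed
  thus ?thesis using infdist_half[OF assms(2), of x b] by (simp add: t_def)
qed


lemma part1:
  fixes a :: "nat \<Rightarrow> real^'n" and b :: "nat \<Rightarrow> real" and m :: nat
    and f :: "real^'n \<Rightarrow> real" and \<beta> g d :: real
  assumes a_nz: "\<And>i. i \<in> {1..m} \<Longrightarrow> a i \<noteq> 0"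
    and \<beta>_pos: "\<beta> > 0"
    and hoffman: "\<And>x. \<beta> * (\<Sum>i\<in>{1..m}. infdist x (halfspace (a i) (b i)))
                        \<ge> infdist x (\<Inter>i\<in>{1..m}. halfspace (a i) (b i))"
    and g: "g > 0" and d: "d > 0"
    and xh: "xh \<in> (\<Inter>i\<in>{1..m}. halfspace (a i) (b i))"
    and xs: "xs \<in> minimizers (Fpen f a b m g d)"
  shows "infdist xs (\<Inter>i\<in>{1..m}. halfspace (a i) (b i))
            \<le> real m * \<beta> / g * (f xh - f xs)
               + real m * \<beta> * d / (4 * Min ((\<lambda>i. norm (a i)) ` {1..m}))"
proof (cases "m = 0")
  case True
  thus ?thesis by simp
next
  case False
  define A where "A = Min ((\<lambda>i. norm (a i)) ` {1..m})"
  define X where "X = (\<Inter>i\<in>{1..m}. halfspace (a i) (b i))"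
  have ne: "{1..m} \<noteq> {}" using False by simp
  have Ain: "A \<in> (\<lambda>i. norm (a i)) ` {1..m}" unfolding A_def using ne by (intro Min_in) auto
  have Apos: "A > 0" using Ain a_nz by auto
  have Ale: "\<And>i. i \<in> {1..m} \<Longrightarrow> A \<le> norm (a i)" unfolding A_def by (intro Min_le) auto
  have mpos: "real m > 0" using False by simp
  define S where "S = (\<lambda>x. \<Sum>i\<in>{1..m}. hdelta d (a i) (b i) x)"
  have "Fpen f a b m g d xs \<le> Fpen f a b m g d xh" using xs by (simp add: minimizers_def)
  hence F: "f xs + g / real m * S xs \<le> f xh + g / real m * S xh" by (simp add: Fpen_def S_def)
  have "S xh \<le> (\<Sum>i\<in>{1..m}. d / (4 * A))" unfolding S_def
  proof (rule sum_mono)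
    fix i assume i: "i \<in> {1..m}"
    have "hdelta d (a i) (b i) xh \<le> d / (4 * norm (a i))"
      using hd_le[OF d a_nz[OF i]] xh i by auto
    also have "\<dots> \<le> d / (4 * A)" using Ale[OF i] Apos d
      by (intro divide_left_mono) (auto simp: zero_less_mult_iff)
    finally show "hdelta d (a i) (b i) xh \<le> d / (4 * A)" .
  qed
  hence Sxh: "S xh \<le> real m * (d / (4 * A))" by simp
  have Sxs: "(\<Sum>i\<in>{1..m}. infdist xs (halfspace (a i) (b i))) \<le> S xs"
    unfolding S_def by (intro sum_mono infdist_le_hd d a_nz) auto
  have "g / real m * S xs \<le> f xh - f xs + g / real m * (real m * (d / (4 * A)))"
    using F Sxh g mpos mult_left_mono[OF Sxh, of "g / real m"] by simp
  hence "S xs \<le> real m / g * (f xh - f xs) + real m * (d / (4 * A))"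
    using g mpos by (simp add: field_simps)
  hence "\<beta> * S xs \<le> \<beta> * (real m / g * (f xh - f xs) + real m * (d / (4 * A)))"
    using \<beta>_pos by simp
  moreover have "infdist xs X \<le> \<beta> * S xs"
    using hoffman[of xs] mult_left_mono[OF Sxs, of \<beta>] \<beta>_pos unfolding X_def by linarith
  ultimately have "infdist xs X \<le> \<beta> * (real m / g * (f xh - f xs) + real m * (d / (4 * A)))"
    by linarith
  moreover have "\<beta> * (real m / g * (f xh - f xs) + real m * (d / (4 * A)))
     = real m * \<beta> / g * (f xh - f xs) + real m * \<beta> * d / (4 * A)"
    using g Apos by (simp add: field_simps)
  ultimately show ?thesis unfolding X_def A_def by linarith
qed

theorem proposition5:
  fixes a :: "nat \<Rightarrow> real^'n" and b :: "nat \<Rightarrow> real" and m :: nat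
    and f :: "real^'n \<Rightarrow> real" and \<beta> c :: real
    and \<gamma> \<delta> :: "nat \<Rightarrow> real"
  assumes a_nz: "\<And>i. i \<in> {1..m} \<Longrightarrow> a i \<noteq> 0"
    and X_ne: "(\<Inter>i\<in>{1..m}. halfspace (a i) (b i)) \<noteq> {}"
    and \<beta>_pos: "\<beta> > 0"
    and hoffman: "\<And>x. \<beta> * (\<Sum>i\<in>{1..m}. infdist x (halfspace (a i) (b i)))
                        \<ge> infdist x (\<Inter>i\<in>{1..m}. halfspace (a i) (b i))"
    and f_cont: "continuous_on UNIV f"
    and f_lev: "\<And>t. bounded {x. f x \<le> t}"
    and c_pos: "c > 0"
    and \<gamma>_pos: "\<And>k. \<gamma> k > 0"
    and \<delta>_pos: "\<And>k. \<delta> k > 0"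
    and \<gamma>\<delta>_le: "\<And>k. \<gamma> k * \<delta> k \<le> c"
  shows
    "(\<forall>xh \<in> (\<Inter>i\<in>{1..m}. halfspace (a i) (b i)). \<forall>k.
        \<forall>xs \<in> minimizers (Fpen f a b m (\<gamma> k) (\<delta> k)).
          infdist xs (\<Inter>i\<in>{1..m}. halfspace (a i) (b i))
            \<le> real m * \<beta> / \<gamma> k * (f xh - f xs)
               + real m * \<beta> * \<delta> k / (4 * Min ((\<lambda>i. norm (a i)) ` {1..m})))
     \<and> (filterlim \<gamma> at_top sequentially \<and> \<delta> \<longlonglongrightarrow> 0 \<longrightarrow>
        (\<forall>xs :: nat \<Rightarrow> real^'n.
           (\<forall>k. xs k \<in> minimizers (Fpen f a b m (\<gamma> k) (\<delta> k))) \<longrightarrow>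
             (\<lambda>k. infdist (xs k) (\<Inter>i\<in>{1..m}. halfspace (a i) (b i))) \<longlonglongrightarrow> 0
           \<and> (\<lambda>k. infdist (xs k) (\<Inter>i\<in>{1..m}. halfspace (a i) (b i)))
               \<in> O(\<lambda>k. 1 / \<gamma> k + \<delta> k)))"
proof -
  let ?X = "\<Inter>i\<in>{1..m}. halfspace (a i) (b i)"
  define A where "A = Min ((\<lambda>i. norm (a i)) ` {1..m})"
  have P1: "\<forall>xh \<in> ?X. \<forall>k. \<forall>xs \<in> minimizers (Fpen f a b m (\<gamma> k) (\<delta> k)).
          infdist xs ?X \<le> real m * \<beta> / \<gamma> k * (f xh - f xs) + real m * \<beta> * \<delta> k / (4 * A)"
    unfolding A_def using part1[OF a_nz \<beta>_pos hoffman \<gamma>_pos \<delta>_pos] by blast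
  obtain xh0 where xh0: "xh0 \<in> ?X" using X_ne by blast
  define K where "K = {x. f x \<le> f xh0}"
  have "closed K" unfolding K_def
    by (intro closed_Collect_le f_cont continuous_on_const)
  hence "compact K" using f_lev unfolding K_def by (simp add: compact_eq_bounded_closed)
  moreover have "K \<noteq> {}" using K_def by auto
  moreover have "continuous_on K f" using f_cont continuous_on_subset by blast
  ultimately obtain x0 where "x0 \<in> K" "\<forall>y\<in>K. f x0 \<le> f y"
    using continuous_attains_inf by blast
  hence fmin: "\<And>y. f x0 \<le> f y" unfolding K_def
    by (metis (mono_tags, lifting) linorder_not_le mem_Collect_eq order_less_imp_le order.trans)
  define M where "M = f xh0 - f x0"
  have M0: "M \<ge> 0" using fmin M_def by simp
  define B where "B = real m * \<beta> / (4 * A)"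
  have B0: "B \<ge> 0"
  proof (cases "m = 0")
    case False
    hence ne: "{1..m} \<noteq> {}" by simp
    have "A \<in> (\<lambda>i. norm (a i)) ` {1..m}" unfolding A_def using ne by (intro Min_in) auto
    hence "A > 0" using a_nz by auto
    thus ?thesis unfolding B_def using \<beta>_pos by simp
  qed (simp add: B_def)
  define C where "C = real m * \<beta> * M + B"
  have C0: "C \<ge> 0" unfolding C_def using M0 B0 \<beta>_pos by simp
  have P2: "filterlim \<gamma> at_top sequentially \<and> \<delta> \<longlonglongrightarrow> 0 \<longrightarrow>
        (\<forall>xs :: nat \<Rightarrow> real^'n.
           (\<forall>k. xs k \<in> minimizers (Fpen f a b m (\<gamma> k) (\<delta> k))) \<longrightarrow>
             (\<lambda>k. infdist (xs k) ?X) \<longlonglongrightarrow> 0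
           \<and> (\<lambda>k. infdist (xs k) ?X) \<in> O(\<lambda>k. 1 / \<gamma> k + \<delta> k))"
  proof (intro impI allI)
    fix xs :: "nat \<Rightarrow> real^'n"
    assume lim: "filterlim \<gamma> at_top sequentially \<and> \<delta> \<longlonglongrightarrow> 0"
    assume xs: "\<forall>k. xs k \<in> minimizers (Fpen f a b m (\<gamma> k) (\<delta> k))"
    have bnd: "infdist (xs k) ?X \<le> C * (1 / \<gamma> k + \<delta> k)" for k
    proof -
      have "infdist (xs k) ?X \<le> real m * \<beta> / \<gamma> k * (f xh0 - f (xs k)) + real m * \<beta> * \<delta> k / (4 * A)"
        using P1 xh0 xs by blast
      also have "real m * \<beta> / \<gamma> k * (f xh0 - f (xs k)) \<le> real m * \<beta> / \<gamma> k * M"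
        unfolding M_def using fmin[of "xs k"] \<gamma>_pos[of k] \<beta>_pos
        by (intro mult_left_mono) auto
      also have "real m * \<beta> * \<delta> k / (4 * A) = B * \<delta> k" unfolding B_def by simp
      also have "real m * \<beta> / \<gamma> k * M + B * \<delta> k \<le> C * (1 / \<gamma> k + \<delta> k)"
        unfolding C_def using M0 B0 \<beta>_pos \<gamma>_pos[of k] \<delta>_pos[of k]
        by (simp add: algebra_simps mult_nonneg_nonneg)
      finally show ?thesis by simp
    qed
    have "(\<lambda>k. inverse (\<gamma> k)) \<longlonglongrightarrow> 0" using lim tendsto_inverse_0_at_top by blast
    hence "(\<lambda>k. 1 / \<gamma> k + \<delta> k) \<longlonglongrightarrow> 0 + 0" using lim
      by (intro tendsto_add) (auto simp: divide_inverse)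
    hence "(\<lambda>k. C * (1 / \<gamma> k + \<delta> k)) \<longlonglongrightarrow> C * 0" by (intro tendsto_mult) auto
    hence T: "(\<lambda>k. C * (1 / \<gamma> k + \<delta> k)) \<longlonglongrightarrow> 0" by simp
    show "(\<lambda>k. infdist (xs k) ?X) \<longlonglongrightarrow> 0 \<and> (\<lambda>k. infdist (xs k) ?X) \<in> O(\<lambda>k. 1 / \<gamma> k + \<delta> k)"
    proof
      show "(\<lambda>k. infdist (xs k) ?X) \<longlonglongrightarrow> 0"
      proof (rule tendsto_sandwich[OF _ _ tendsto_const T])
        show "\<forall>\<^sub>F k in sequentially. 0 \<le> infdist (xs k) ?X"
          by (rule always_eventually) (simp add: infdist_nonneg)
        show "\<forall>\<^sub>F k in sequentially. infdist (xs k) ?X \<le> C * (1 / \<gamma> k + \<delta> k)"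
          by (rule always_eventually) (use bnd in blast)
      qed
      show "(\<lambda>k. infdist (xs k) ?X) \<in> O(\<lambda>k. 1 / \<gamma> k + \<delta> k)"
      proof (rule bigoI)
        show "\<forall>\<^sub>F k in sequentially. norm (infdist (xs k) ?X) \<le> C * norm (1 / \<gamma> k + \<delta> k)"
        proof (rule always_eventually, rule allI)
          fix k
          have "0 < 1 / \<gamma> k + \<delta> k" using \<gamma>_pos[of k] \<delta>_pos[of k]
            by (metis add_pos_pos zero_less_divide_1_iff)
          thus "norm (infdist (xs k) ?X) \<le> C * norm (1 / \<gamma> k + \<delta> k)"
            using bnd[of k] infdist_nonneg[of "xs k" ?X] by simp
        qed
      qed
    qed
  qed
  show ?thesis using P1 P2 unfolding A_def by blast
qed

end
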